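(* Let $m,n,a$ be natural numbers with $m\geq 2$, $1\leq a\leq 9$ and $a\neq 6$. Then the equation $$B_n = a\left(\frac{10^m-1}{9}\right)$$ has no solution. That is, no balancing number is a decimal repdigit with at least two digits whose repeated digit differs from $6$.
   Context: The balancing sequence $(B_n)_{n\geq 0}$ is defined by $B_0=0$, $B_1=1$ and $B_{n+1}=6B_n-B_{n-1}$ for $n\geq 1$. For $1\le a\le 9$ and $m\ge 1$, the number $a\frac{10^m-1}{9}$ is the decimal integer consisting of $m$ copies of the digit $a$. *)

theory Defs
  imports Main
begin

fun balancing :: "nat \<Rightarrow> int" where
  "balancing 0 = 0"
| "balancing (Suc 0) = 1"
| "balancing (Suc (Suc n)) = 6 * balancing (Suc n) - balancing n"

end

theory Submission
  imports Defs
begin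

definition TL :: "(int \<times> int) list" where
  "TL = [(0,1), (1,6), (6,35), (35,204), (204,89), (89,330), (330,791), (791,16), (16,405), (405,214), (214,879), (879,660), (660,881), (881,226), (226,475), (475,424), (424,969), (969,990), (990,571), (571,236), (236,845), (845,434), (434,659), (659,220), (220,661), (661,446), (446,915), (915,644), (644,749), (749,550), (550,351), (351,456), (456,185), (185,654), (654,439), (439,880), (880,441), (441,666), (666,255), (255,864), (864,529), (529,110), (110,131), (131,676), (676,625), (625,874), (874,219), (219,440), (440,221), (221,886), (886,695), (695,1084), (1084,309), (309,770), (770,1011), (1011,896), (896,1065), (1065,1094), (1094,1099), (1099,0)]"

lemma T_closed_list: "list_all (\<lambda>p. (snd p, (6 * snd p - fst p) mod 1100) \<in> set TL) TL"
  unfolding TL_def by code_simp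

lemma T_closed: "p \<in> set TL \<Longrightarrow> (snd p, (6 * snd p - fst p) mod 1100) \<in> set TL"
  using T_closed_list by (simp add: list_all_iff)

lemma T_good_list: "list_all (\<lambda>p. fst p \<notin> {11, 22, 33, 44, 55, 77, 88, 99, 111, 222, 333, 444, 555, 777, 888, 999}) TL"
  unfolding TL_def by code_simp

lemma pair_in_T: "(balancing n mod 1100, balancing (Suc n) mod 1100) \<in> set TL"
proof (induction n)
  case 0
  show ?case unfolding TL_def by simp
next
  case (Suc n)
  have e: "balancing (Suc (Suc n)) mod 1100
      = (6 * (balancing (Suc n) mod 1100) - balancing n mod 1100) mod 1100"
    by (simp, metis mod_diff_left_eq mod_diff_right_eq mod_mult_right_eq)
  show ?case using T_closed[OF Suc.IH] unfolding e by simp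
qed

lemma bal_mod: "balancing n mod 1100 \<notin> {11, 22, 33, 44, 55, 77, 88, 99, 111, 222, 333, 444, 555, 777, 888, 999}"
  using pair_in_T[of n] T_good_list by (fastforce simp add: list_all_iff)

lemma pow10_mod9: "(10::int) ^ m mod 9 = 1"
proof (induction m)
  case 0 then show ?case by simp
next
  case (Suc m)
  have "(10::int) ^ Suc m mod 9 = (10 * ((10::int) ^ m mod 9)) mod 9"
    by (simp add: mod_mult_right_eq)
  then show ?case using Suc.IH by simp
qed

lemma rep_step: "((10::int) ^ Suc m - 1) div 9 = 10 * (((10::int) ^ m - 1) div 9) + 1"
proof -
  have "(10::int) ^ m mod 9 = 1 mod 9" using pow10_mod9[of m] by simp
  then have "9 dvd ((10::int) ^ m - 1)" by (simp only: mod_eq_dvd_iff)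
  then obtain k where k: "(10::int) ^ m - 1 = 9 * k" by blast
  have "(10::int) ^ Suc m - 1 = 9 * (10 * k + 1)" using k by simp
  then show ?thesis using k by simp
qed

lemma rep_mod: "m \<ge> 2 \<Longrightarrow> ((10::int) ^ m - 1) div 9 mod 1100 \<in> {11, 111}"
proof (induction m rule: nat_induct_at_least)
  case base then show ?case by simp
next
  case (Suc m)
  have "((10::int) ^ Suc m - 1) div 9 mod 1100 = (10 * (((10::int) ^ m - 1) div 9 mod 1100) + 1) mod 1100"
    unfolding rep_step by (metis mod_add_left_eq mod_mult_right_eq)
  then show ?case using Suc.IH by auto
qed

theorem theorem1:
  fixes m n a :: nat
  assumes "m \<ge> 2" and "1 \<le> a" and "a \<le> 9" and "a \<noteq> 6"
  shows "balancing n \<noteq> int a * ((10 ^ m - 1) div 9)"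
proof
  assume h: "balancing n = int a * ((10 ^ m - 1) div 9)"
  have e: "balancing n mod 1100 = (int a * (((10::int) ^ m - 1) div 9 mod 1100)) mod 1100"
    unfolding h by (simp add: mod_mult_right_eq)
  have "a \<in> {1,2,3,4,5,7,8,9}" using assms by auto
  then have "balancing n mod 1100 \<in> {11, 22, 33, 44, 55, 77, 88, 99, 111, 222, 333, 444, 555, 777, 888, 999}"
    using rep_mod[OF assms(1)] unfolding e by auto
  then show False using bal_mod[of n] by blast
qed

end
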